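(* Let $c(t)=\sum_{n\ge0}c_nt^n\in\mathbb Q[h,\beta,\gamma][[t]]$. Then $$\Big(1-\frac\beta4t^2\Big)^2\frac{d}{dt}c(t)=(c(t)-1)\Big(h\Big(1-\frac\beta4t^2\Big)-\gamma\frac{t^2}2\Big).$$
   Context: $h,\beta,\gamma$ are formal variables. The $c_n\in\mathbb Q[h,\beta,\gamma]$ are defined by $c_0=2$ and, for $n\ge1$, by $\log\big(1+\sum_{n\ge1}c_nt^n\big)=\sum_{m\ge1}(-1)^{m-1}(m-1)!\,\mathrm{ch}_mt^m$, where $\mathrm{ch}_1=h$, $\mathrm{ch}_{2n}=0$, and $\mathrm{ch}_{2n-1}=\frac1{(2n-1)!}\big(\frac{\beta h}4-\frac{n-1}2\gamma\big)\big(\frac\beta4\big)^{n-2}$ for $n\ge2$ (i.e. $1+\sum_{n\ge1}c_nt^n$ is the total Chern polynomial of a virtual class with Chern character components $\mathrm{ch}_m$). *)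

theory Defs
  imports "HOL-Computational_Algebra.Formal_Power_Series"
begin

text \<open>The Chern character components ch_m. The formal variables h, beta, gamma are
  modelled as arbitrary elements of an arbitrary field of characteristic 0
  (e.g. the fraction field of Q[h,beta,gamma]).\<close>
definition ch :: "'a::field_char_0 \<Rightarrow> 'a \<Rightarrow> 'a \<Rightarrow> nat \<Rightarrow> 'a" where
  "ch h \<beta> \<gamma> m =
     (if m = 0 then 0
      else if m = 1 then h
      else if even m then 0
      else (let n = (m + 1) div 2 in
              (1 / fact (2*n - 1)) * (\<beta> * h / 4 - (of_nat n - 1) / 2 * \<gamma>) * (\<beta> / 4) ^ (n - 2)))"

definition chlog :: "'a::field_char_0 \<Rightarrow> 'a \<Rightarrow> 'a \<Rightarrow> 'a fps" where
  "chlog h \<beta> \<gamma> = Abs_fps (\<lambda>m. if m = 0 then 0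
                                 else (-1) ^ (m - 1) * fact (m - 1) * ch h \<beta> \<gamma> m)"

text \<open>The series S = sum_{n>=1} c_n t^n, characterised by log(1 + S) = chlog,
  where log(1+S) is the composition of log(1+X) (= fps_ln 1) with S.\<close>
definition cS :: "'a::field_char_0 \<Rightarrow> 'a \<Rightarrow> 'a \<Rightarrow> 'a fps" where
  "cS h \<beta> \<gamma> = (THE S. fps_nth S 0 = 0 \<and> fps_ln 1 oo S = chlog h \<beta> \<gamma>)"

definition cser :: "'a::field_char_0 \<Rightarrow> 'a \<Rightarrow> 'a \<Rightarrow> 'a fps" where
  "cser h \<beta> \<gamma> = Abs_fps (\<lambda>n. if n = 0 then 2 else fps_nth (cS h \<beta> \<gamma>) n)"

end

theory Submission
  imports Defs
begin
unbundle fps_syntax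

lemma chlog0: "chlog h \<beta> \<gamma> $ 0 = 0"
  by (simp add: chlog_def)

lemma cS_prop:
  fixes h \<beta> \<gamma> :: "'a::field_char_0"
  shows "cS h \<beta> \<gamma> $ 0 = 0 \<and> fps_ln 1 oo cS h \<beta> \<gamma> = chlog h \<beta> \<gamma>"
proof -
  define E :: "'a fps" where "E = fps_exp 1 - 1"
  define L where "L = chlog h \<beta> \<gamma>"
  have E0: "E $ 0 = 0" by (simp add: E_def)
  have E1: "E $ 1 \<noteq> 0" by (simp add: E_def)
  have L0: "L $ 0 = 0" by (simp add: L_def chlog0)
  have ln: "fps_ln (1::'a) = fps_inv E" unfolding E_def by (rule fps_ln_fps_exp_inv) simp
  have inv1: "fps_inv E oo E = fps_X" by (rule fps_inv[OF E0 E1])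
  have inv2: "E oo fps_inv E = fps_X" by (rule fps_inv_right[OF E0 E1])
  have ex: "(E oo L) $ 0 = 0 \<and> fps_ln 1 oo (E oo L) = L"
    using E0 L0 by (simp add: ln fps_compose_assoc inv1)
  have un: "S = E oo L" if "S $ 0 = 0 \<and> fps_ln 1 oo S = L" for S
  proof -
    have "E oo L = E oo (fps_inv E oo S)" using that ln by simp
    also have "\<dots> = (E oo fps_inv E) oo S"
      using that by (simp add: fps_compose_assoc fps_inv_def)
    also have "\<dots> = S" using that by (simp add: inv2)
    finally show ?thesis by simp
  qed
  have "(THE S. S $ 0 = 0 \<and> fps_ln 1 oo S = L) = E oo L"
    using ex un by (intro the_equality) auto
  then show ?thesis unfolding cS_def L_def[symmetric] using ex by simp
qed

definition dd :: "'a::field_char_0 \<Rightarrow> 'a \<Rightarrow> 'a \<Rightarrow> nat \<Rightarrow> 'a" where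
  "dd h \<beta> \<gamma> k = (if odd k then 0 else if k = 0 then h
     else (\<beta> * h / 4 - of_nat (k div 2) * \<gamma> / 2) * (\<beta> / 4) ^ (k div 2 - 1))"

lemma deriv_chlog:
  fixes h \<beta> \<gamma> :: "'a::field_char_0"
  shows "fps_deriv (chlog h \<beta> \<gamma>) = Abs_fps (dd h \<beta> \<gamma>)"
proof (rule fps_ext)
  fix k
  show "fps_deriv (chlog h \<beta> \<gamma>) $ k = Abs_fps (dd h \<beta> \<gamma>) $ k"
  proof (cases "odd k")
    case True
    then have "k \<noteq> 0" by (rule odd_pos[THEN less_imp_neq, symmetric])
    then show ?thesis using True by (simp add: chlog_def ch_def dd_def)
  next
    case False
    then obtain j where k: "k = 2 * j" by (auto elim: evenE)
    show ?thesis
    proof (cases "j = 0")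
      case True then show ?thesis using k by (simp add: chlog_def ch_def dd_def)
    next
      case False
      define A where "A = (\<beta> * h / 4 - of_nat j * \<gamma> / 2) * (\<beta> / 4) ^ (j - 1)"
      have n: "(2 * j + 1 + 1) div 2 = j + 1" by simp
      have ch: "ch h \<beta> \<gamma> (Suc (2*j)) = A / fact (2*j+1)"
        using False by (simp add: ch_def n A_def Let_def)
      have f: "(fact (2*j+1) :: 'a) = of_nat (2*j+1) * fact (2 * j)"
        by (simp add: fact_Suc)
      have fn: "(fact (2 * j) :: 'a) \<noteq> 0" by simp
      have "fps_deriv (chlog h \<beta> \<gamma>) $ k = of_nat (2*j+1) * (fact (2*j) * (A / fact (2*j+1)))"
        using k by (simp add: chlog_def ch)
      also have "\<dots> = A" using f fn by (simp del: of_nat_Suc of_nat_add)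
      finally show ?thesis using k False by (simp add: dd_def A_def)
    qed
  qed
qed

lemma key_identity:
  fixes h \<beta> \<gamma> :: "'a::field_char_0"
  shows "(1 - fps_const (\<beta> / 4) * fps_X ^ 2) ^ 2 * Abs_fps (dd h \<beta> \<gamma>)
       = fps_const h * (1 - fps_const (\<beta> / 4) * fps_X ^ 2) - fps_const (\<gamma> / 2) * fps_X ^ 2"
proof -
  define c where "c = \<beta> / 4"
  define D where "D = Abs_fps (dd h \<beta> \<gamma>)"
  have sq: "(1 - fps_const c * fps_X ^ 2) ^ 2 =
      1 - fps_const (2 * c) * fps_X ^ 2 + fps_const (c * c) * (fps_X :: 'a fps) ^ 4"
  proof -
    have x4: "(fps_X :: 'a fps) ^ 4 = fps_X^2 * fps_X^2" by (simp flip: power_add)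
    have "(1 - fps_const c * fps_X ^ 2) ^ 2 =
      1 - 2 * (fps_const c * fps_X ^ 2) + (fps_const c * fps_const c) * ((fps_X :: 'a fps) ^ 2 * fps_X^2)"
      by (simp add: power2_eq_square algebra_simps)
    also have "\<dots> = 1 - fps_const (2 * c) * fps_X ^ 2 + fps_const (c * c) * (fps_X :: 'a fps) ^ 4"
      proof -
        have a1: "fps_const (2 * c) = (2::'a fps) * fps_const c"
          by (metis fps_const_mult numeral_fps_const)
        have a2: "fps_const (c * c) = fps_const c * (fps_const c :: 'a fps)"
          by (metis fps_const_mult)
        show ?thesis unfolding a1 a2 x4 by (simp only: mult.assoc)
      qed
    finally show ?thesis .
  qed
  have "(1 - fps_const (2 * c) * fps_X ^ 2 + fps_const (c * c) * fps_X ^ 4) * D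
      = fps_const h * (1 - fps_const c * fps_X ^ 2) - fps_const (\<gamma> / 2) * fps_X ^ 2"
  proof (rule fps_ext)
    fix n
    have e: "((1 - fps_const (2 * c) * fps_X ^ 2 + fps_const (c * c) * fps_X ^ 4) * D) $ n
       = D $ n - 2 * c * (if n < 2 then 0 else D $ (n - 2)) + c * c * (if n < 4 then 0 else D $ (n-4))"
      proof -
        have "(1 - fps_const (2 * c) * fps_X ^ 2 + fps_const (c * c) * fps_X ^ 4) * D
           = D - fps_const (2 * c) * (fps_X ^ 2 * D) + fps_const (c * c) * (fps_X ^ 4 * D)"
          by (simp only: distrib_right left_diff_distrib mult.assoc mult_1)
        then show ?thesis
          by (simp only: fps_add_nth fps_sub_nth fps_mult_left_const_nth fps_X_power_mult_nth)
      qed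
    have r: "(fps_const h * (1 - fps_const c * fps_X ^ 2) - fps_const (\<gamma> / 2) * fps_X ^ 2) $ n
       = (if n = 0 then h else 0) - h * c * (if n = 2 then 1 else 0) - \<gamma> / 2 * (if n = 2 then 1 else 0)"
      by (simp add: algebra_simps fps_X_power_nth)
    show "((1 - fps_const (2 * c) * fps_X ^ 2 + fps_const (c * c) * fps_X ^ 4) * D) $ n =
       (fps_const h * (1 - fps_const c * fps_X ^ 2) - fps_const (\<gamma> / 2) * fps_X ^ 2) $ n"
      unfolding e r
    proof (cases "n < 4")
      case True
      then have "n = 0 \<or> n = 1 \<or> n = 2 \<or> n = 3" by auto
      then show "D $ n - 2 * c * (if n < 2 then 0 else D $ (n - 2)) + c * c * (if n < 4 then 0 else D $ (n-4))
        = (if n = 0 then h else 0) - h * c * (if n = 2 then 1 else 0) - \<gamma> / 2 * (if n = 2 then 1 else 0)"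
        by (auto simp: D_def dd_def c_def field_simps)
    next
      case False
      then obtain m where m: "n = m + 4" by (metis add.commute le_Suc_ex not_less)
      show "D $ n - 2 * c * (if n < 2 then 0 else D $ (n - 2)) + c * c * (if n < 4 then 0 else D $ (n-4))
        = (if n = 0 then h else 0) - h * c * (if n = 2 then 1 else 0) - \<gamma> / 2 * (if n = 2 then 1 else 0)"
      proof (cases "odd m")
        case True
        then have "odd n" "odd (n - 2)" "odd (n - 4)" using m by auto
        then show ?thesis using m by (simp add: D_def dd_def)
      next
        case False
        then obtain j where j: "m = 2 * j" by (auto elim: evenE)
        have a: "n div 2 = j + 2" "(n - 2) div 2 = j + 1" "(n-4) div 2 = j" "n - 2 = 2 * j + 2" "n - 4 = 2 * j"
          using m j by auto
        show ?thesis
        proof (cases "j = 0")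
          case True
          then show ?thesis using m j a by (simp add: D_def dd_def c_def field_simps)
        next
          case False
          then obtain i where i: "j = Suc i" by (cases j) auto
          show ?thesis using m j a i by (simp add: D_def dd_def c_def field_simps)
        qed
      qed
    qed
  qed
  then show ?thesis unfolding c_def[symmetric] D_def[symmetric] sq .
qed

theorem lemma4p1:
  fixes h \<beta> \<gamma> :: "'a::field_char_0"
  shows "(1 - fps_const (\<beta> / 4) * fps_X ^ 2) ^ 2 * fps_deriv (cser h \<beta> \<gamma>)
         = (cser h \<beta> \<gamma> - 1) *
           (fps_const h * (1 - fps_const (\<beta> / 4) * fps_X ^ 2) - fps_const (\<gamma> / 2) * fps_X ^ 2)"
proof -
  define S where "S = cS h \<beta> \<gamma>"
  define L where "L = chlog h \<beta> \<gamma>"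
  define Q :: "'a fps" where "Q = (1 - fps_const (\<beta> / 4) * fps_X ^ 2) ^ 2"
  have S0: "S $ 0 = 0" and SL: "fps_ln 1 oo S = L" using cS_prop unfolding S_def L_def by auto
  have cs: "cser h \<beta> \<gamma> = 1 + (1 + S)"
    by (rule fps_ext) (simp add: cser_def S_def[symmetric] S0 numeral_fps_const)
  have inv: "(1 + fps_X) * inverse (1 + fps_X :: 'a fps) = 1"
    by (rule inverse_mult_eq_1') simp
  have "((1 + fps_X) * inverse (1 + fps_X :: 'a fps)) oo S = 1" by (simp add: inv)
  then have c1: "(1 + S) * (inverse (1 + fps_X) oo S) = 1"
    using S0 by (simp add: fps_compose_mult_distrib fps_compose_add_distrib)
  have dL: "fps_deriv L = (inverse (1 + fps_X) oo S) * fps_deriv S"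
    using SL[symmetric] fps_compose_deriv[OF S0, of "fps_ln 1"] by (simp add: fps_ln_deriv)
  have dS: "fps_deriv S = (1 + S) * fps_deriv L"
    unfolding dL by (simp add: mult.assoc[symmetric] c1)
  have K: "Q * fps_deriv L = fps_const h * (1 - fps_const (\<beta> / 4) * fps_X ^ 2) - fps_const (\<gamma> / 2) * fps_X ^ 2"
    unfolding Q_def L_def deriv_chlog by (rule key_identity)
  show ?thesis
    unfolding cs Q_def[symmetric] K[symmetric]
    by (simp add: dS algebra_simps)
qed

end
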